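(* Assume that the solvency sets $(\mathbf{K}_t)_{t=0,\dots,T}$ are cones. (i) (NA2) holds if and only if $\Xi_t^0=L^0(\mathbf{K}_t,\mathcal{F}_t)$ for all $t\le T$. (ii) (NA2) holds if and only if $\mathrm{m}(\mathbf{K}_t|\mathcal{F}_{t-1})\subseteq\mathbf{K}_{t-1}$ a.s. for $t=1,\dots,T$. (iii) If the solvency sets are strictly proper, then (NA2) implies (SNR), i.e. $\hat\Xi_t^0\cap L^0(-\mathbf{K}_t,\mathcal{F}_t)\subseteq L^0(\mathbf{K}_t^0,\mathcal{F}_t)$ for all $t$.
   Context: $(\Omega,\mathcal{F},(\mathcal{F}_t)_{t=0,\dots,T},\mathbb{P})$ filtered complete probability space, $\mathcal{F}_0$ trivial. $L^0(\Gamma,\mathcal{F}_t)$: $\mathcal{F}_t$-measurable random vectors a.s. in $\Gamma$. Solvency sets: $\mathbf{K}_t$ is an $\mathcal{F}_t$-measurable random closed convex set in $\mathbb{R}^d$ with $\mathbf{K}_t+\mathbb{R}^d_+\subseteq\mathbf{K}_t$ and $\mathbf{K}_t\cap\mathbb{R}^d_-=\{0\}$ a.s.; $\mathbf{K}_t^0=\bigcap_{c\in\mathbb{Q}\setminus\{0\}}c\mathbf{K}_t$; strictly proper: $\mathbf{K}_t\cap(-\mathbf{K}_t)=\{0\}$ a.s. $\mathsf{A}_{t,s}=\sum_{u=t}^sL^0(-\mathbf{K}_u,\mathcal{F}_u)$. $\Xi_T^0=L^0(\mathbf{K}_T,\mathcal{F}_T)$, $\Xi_t^0=L^0(\mathbf{K}_t,\mathcal{F}_t)+(\Xi_{t+1}^0\cap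 L^0(\mathbb{R}^d,\mathcal{F}_t))$ for $t<T$ (equivalently $\Xi_t^0=(-\mathsf{A}_{t,T})\cap L^0(\mathbb{R}^d,\mathcal{F}_t)$); $\hat\Xi_T^0=\Xi_T^0$, $\hat\Xi_t^0=L^0(\mathbf{K}_t,\mathcal{F}_t)+\mathrm{cl}_0(\Xi_{t+1}^0\cap L^0(\mathbb{R}^d,\mathcal{F}_t))$ for $t<T$ ($\mathrm{cl}_0$: closure in probability). (NA2) (no arbitrage of the second kind): for every $t=0,\dots,T$ and $\eta_t\in L^0(\mathbb{R}^d,\mathcal{F}_t)$, if $(\eta_t+\mathsf{A}_{t,T})\cap L^0(\mathbf{K}_T,\mathcal{F}_T)\neq\emptyset$ then $\eta_t\in L^0(\mathbf{K}_t,\mathcal{F}_t)$. $\mathrm{m}(\mathbf{X}|\mathcal{F}_{t-1})$ is the largest $\mathcal{F}_{t-1}$-measurable random set a.s. contained in $\mathbf{X}$. *)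

theory Defs
  imports "HOL-Probability.Probability"
begin

(* Omega :: 'a, the filtered probability space is (M, F 0, ..., F T); vectors in R^d are real^'d *)

definition nonneg_orthant :: "(real^'d) set" where
  "nonneg_orthant = {x. \<forall>i. 0 \<le> x $ i}"

definition nonpos_orthant :: "(real^'d) set" where
  "nonpos_orthant = {x. \<forall>i. x $ i \<le> 0}"

definition effros_measurable :: "'a measure \<Rightarrow> ('a \<Rightarrow> ('b::topological_space) set) \<Rightarrow> bool" where
  "effros_measurable H X \<longleftrightarrow>
     (\<forall>U. open U \<longrightarrow> {\<omega> \<in> space H. X \<omega> \<inter> U \<noteq> {}} \<in> sets H)"

definition random_closed_set :: "'a measure \<Rightarrow> ('a \<Rightarrow> ('b::topological_space) set) \<Rightarrow> bool" where
  "random_closed_set H X \<longleftrightarrow> (\<forall>\<omega>\<in>space H. closed (X \<omega>)) \<and> effros_measurable H X"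

definition L0 :: "'a measure \<Rightarrow> 'a measure \<Rightarrow> ('a \<Rightarrow> ('b::topological_space) set) \<Rightarrow> ('a \<Rightarrow> 'b) set" where
  "L0 M H G = {\<xi> \<in> borel_measurable H. AE \<omega> in M. \<xi> \<omega> \<in> G \<omega>}"

definition negset :: "('a \<Rightarrow> ('b::ab_group_add) set) \<Rightarrow> 'a \<Rightarrow> 'b set" where
  "negset G = (\<lambda>\<omega>. uminus ` G \<omega>)"

definition rv_plus :: "('a \<Rightarrow> 'b::plus) set \<Rightarrow> ('a \<Rightarrow> 'b) set \<Rightarrow> ('a \<Rightarrow> 'b) set" where
  "rv_plus A B = {(\<lambda>\<omega>. f \<omega> + g \<omega>) | f g. f \<in> A \<and> g \<in> B}"

definition Aset :: "'a measure \<Rightarrow> (nat \<Rightarrow> 'a measure) \<Rightarrow> (nat \<Rightarrow> 'a \<Rightarrow> (real^'d) set)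
     \<Rightarrow> nat \<Rightarrow> nat \<Rightarrow> ('a \<Rightarrow> real^'d) set" where
  "Aset M F K t s = {(\<lambda>\<omega>. \<Sum>u\<in>{t..s}. \<xi> u \<omega>) | \<xi>.
       \<forall>u\<in>{t..s}. \<xi> u \<in> L0 M (F u) (negset (K u))}"

definition Xi0 :: "'a measure \<Rightarrow> (nat \<Rightarrow> 'a measure) \<Rightarrow> (nat \<Rightarrow> 'a \<Rightarrow> (real^'d) set)
     \<Rightarrow> nat \<Rightarrow> nat \<Rightarrow> ('a \<Rightarrow> real^'d) set" where
  "Xi0 M F K T t = (\<lambda>f \<omega>. - f \<omega>) ` Aset M F K t T \<inter> L0 M (F t) (\<lambda>_. UNIV)"

definition conv_in_prob :: "'a measure \<Rightarrow> (nat \<Rightarrow> 'a \<Rightarrow> 'b::metric_space) \<Rightarrow> ('a \<Rightarrow> 'b) \<Rightarrow> bool" where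
  "conv_in_prob M X Y \<longleftrightarrow>
     (\<forall>\<epsilon>>0. (\<lambda>n. measure M {\<omega> \<in> space M. \<epsilon> < dist (X n \<omega>) (Y \<omega>)}) \<longlonglongrightarrow> 0)"

definition cl0 :: "'a measure \<Rightarrow> ('a \<Rightarrow> 'b::metric_space) set \<Rightarrow> ('a \<Rightarrow> 'b) set" where
  "cl0 M S = {Y \<in> borel_measurable M. \<exists>X. (\<forall>n. X n \<in> S) \<and> conv_in_prob M X Y}"

definition Xihat0 :: "'a measure \<Rightarrow> (nat \<Rightarrow> 'a measure) \<Rightarrow> (nat \<Rightarrow> 'a \<Rightarrow> (real^'d) set)
     \<Rightarrow> nat \<Rightarrow> nat \<Rightarrow> ('a \<Rightarrow> real^'d) set" where
  "Xihat0 M F K T t =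
     (if T \<le> t then Xi0 M F K T T
      else rv_plus (L0 M (F t) (K t)) (cl0 M (Xi0 M F K T (Suc t) \<inter> L0 M (F t) (\<lambda>_. UNIV))))"

definition Kzero :: "('a \<Rightarrow> (real^'d) set) \<Rightarrow> 'a \<Rightarrow> (real^'d) set" where
  "Kzero K = (\<lambda>\<omega>. \<Inter>c\<in>\<rat> - {0}. (\<lambda>x. c *\<^sub>R x) ` K \<omega>)"

definition strictly_proper :: "'a measure \<Rightarrow> (nat \<Rightarrow> 'a \<Rightarrow> (real^'d) set) \<Rightarrow> nat \<Rightarrow> bool" where
  "strictly_proper M K T \<longleftrightarrow> (\<forall>t\<le>T. AE \<omega> in M. K t \<omega> \<inter> uminus ` K t \<omega> = {0})"

definition NA2 :: "'a measure \<Rightarrow> (nat \<Rightarrow> 'a measure) \<Rightarrow> (nat \<Rightarrow> 'a \<Rightarrow> (real^'d) set) \<Rightarrow> nat \<Rightarrow> bool" where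
  "NA2 M F K T \<longleftrightarrow>
     (\<forall>t\<le>T. \<forall>\<eta> \<in> L0 M (F t) (\<lambda>_. UNIV).
        (\<exists>a \<in> Aset M F K t T. (\<lambda>\<omega>. \<eta> \<omega> + a \<omega>) \<in> L0 M (F T) (K T))
        \<longrightarrow> \<eta> \<in> L0 M (F t) (K t))"

definition is_cond_core :: "'a measure \<Rightarrow> 'a measure \<Rightarrow> ('a \<Rightarrow> ('b::topological_space) set)
     \<Rightarrow> ('a \<Rightarrow> 'b set) \<Rightarrow> bool" where
  "is_cond_core M H X Y \<longleftrightarrow>
     random_closed_set H Y \<and> (AE \<omega> in M. Y \<omega> \<subseteq> X \<omega>) \<and>
     (\<forall>Z. random_closed_set H Z \<and> (AE \<omega> in M. Z \<omega> \<subseteq> X \<omega>) \<longrightarrow> (AE \<omega> in M. Z \<omega> \<subseteq> Y \<omega>))"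

definition market_setting :: "'a measure \<Rightarrow> (nat \<Rightarrow> 'a measure) \<Rightarrow> (nat \<Rightarrow> 'a \<Rightarrow> (real^'d) set) \<Rightarrow> nat \<Rightarrow> bool" where
  "market_setting M F K T \<longleftrightarrow>
     prob_space M \<and> complete_measure M \<and>
     (\<forall>t\<le>T. space (F t) = space M \<and> sets (F t) \<subseteq> sets M) \<and>
     (\<forall>t<T. sets (F t) \<subseteq> sets (F (Suc t))) \<and>
     null_sets M \<subseteq> sets (F 0) \<and>
     (\<forall>A\<in>sets (F 0). measure M A = 0 \<or> measure M A = 1) \<and>
     (\<forall>t\<le>T. random_closed_set (F t) (K t) \<and> (\<forall>\<omega>\<in>space M. convex (K t \<omega>)) \<and>
        (AE \<omega> in M. \<forall>x\<in>K t \<omega>. \<forall>y\<in>nonneg_orthant. x + y \<in> K t \<omega>) \<and>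
        (AE \<omega> in M. K t \<omega> \<inter> nonpos_orthant = {0}))"

end

theory Submission
  imports Defs
begin


lemma negset_iff: "x \<in> negset G \<omega> \<longleftrightarrow> - x \<in> G \<omega>"
  unfolding negset_def by (force intro: image_eqI[where x="-x"])

lemma cone_add:
  assumes "cone S" "convex S" "x \<in> S" "y \<in> S" shows "x + y \<in> S"
proof -
  have "(1/2) *\<^sub>R x + (1/2) *\<^sub>R y \<in> S" using assms convexD[of S x y "1/2" "1/2"] by auto
  then have "2 *\<^sub>R ((1/2) *\<^sub>R x + (1/2) *\<^sub>R y) \<in> S" using assms(1) unfolding cone_def by auto
  then show ?thesis by (simp add: scaleR_add_right)
qed

lemma cone_Kzero_aux:
  assumes "cone S" "x \<in> S" "- x \<in> S" "c \<noteq> 0"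
  shows "x \<in> (\<lambda>y. c *\<^sub>R y) ` S"
proof (cases "c > 0")
  case True
  then have a: "(1/c) *\<^sub>R x \<in> S" using assms unfolding cone_def by auto
  have b: "x = c *\<^sub>R ((1/c) *\<^sub>R x)" using assms(4) by simp
  show ?thesis using image_eqI[where f="\<lambda>y. c *\<^sub>R y", OF b a] .
next
  case False
  then have "c < 0" using assms(4) by auto
  have nn: "-1/c \<ge> 0" using \<open>c < 0\<close> by simp
  have "\<forall>d\<ge>0. d *\<^sub>R (-x) \<in> S" using assms unfolding cone_def by blast
  then have a: "(-1/c) *\<^sub>R (- x) \<in> S" using nn by blast
  have b: "x = c *\<^sub>R ((-1/c) *\<^sub>R (-x))" using assms(4) by simp
  show ?thesis using image_eqI[where f="\<lambda>y. c *\<^sub>R y", OF b a] .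
qed

lemma cone_Kzero:
  assumes "cone S" "x \<in> S" "- x \<in> S"
  shows "x \<in> (\<Inter>c\<in>\<rat> - {0}. (\<lambda>y. c *\<^sub>R y) ` S)"
  using cone_Kzero_aux[OF assms] by blast

lemma measurable_sub:
  assumes "f \<in> borel_measurable A" "space A = space B" "sets A \<subseteq> sets B"
  shows "f \<in> borel_measurable B"
  using assms unfolding measurable_def by auto

lemma AE_closed_limit:
  assumes M: "prob_space M" and Y: "Y \<in> borel_measurable M"
    and X: "\<And>n. X n \<in> borel_measurable M" and cv: "conv_in_prob M X Y"
    and XS: "\<And>n. AE \<omega> in M. X n \<omega> \<in> S \<omega>"
    and cl: "\<And>\<omega>. \<omega> \<in> space M \<Longrightarrow> closed (S \<omega>)"
  shows "AE \<omega> in M. (Y \<omega> :: 'b::euclidean_space) \<in> S \<omega>"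
proof -
  interpret prob_space M by fact
  define D where "D m n = {\<omega> \<in> space M. 1/(real m+1) < dist (X n \<omega>) (Y \<omega>)}" for m n
  have Dm: "D m n \<in> sets M" for m n unfolding D_def using X Y by measurable
  have Dnull: "(\<Inter>n. D m n) \<in> null_sets M" for m
  proof -
    have lim: "(\<lambda>n. measure M (D m n)) \<longlonglongrightarrow> 0"
      using cv unfolding conv_in_prob_def D_def by auto
    have "measure M (\<Inter>n. D m n) \<le> 0"
      apply (rule LIMSEQ_le_const[OF lim]) using Dm by (auto intro!: finite_measure_mono)
    moreover have "(\<Inter>n. D m n) \<in> sets M" using Dm by auto
    ultimately show ?thesis
      by (metis emeasure_eq_measure ennreal_0 measure_nonneg null_setsI order_antisym)
  qed
  have "\<exists>N. N \<in> null_sets M \<and> {\<omega>\<in>space M. X n \<omega> \<notin> S \<omega>} \<subseteq> N" for n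
  proof -
    from XS[of n] obtain N where "{\<omega>\<in>space M. X n \<omega> \<notin> S \<omega>} \<subseteq> N" "emeasure M N = 0" "N \<in> sets M"
      by (rule AE_E)
    then show ?thesis by (intro exI[of _ N]) (auto intro: null_setsI)
  qed
  then obtain N where N: "\<And>n. N n \<in> null_sets M" "\<And>n. {\<omega>\<in>space M. X n \<omega> \<notin> S \<omega>} \<subseteq> N n"
    by metis
  show ?thesis
  proof (rule AE_I'[where N="(\<Union>n. N n) \<union> (\<Union>m. \<Inter>n. D m n)"])
    show "(\<Union>n. N n) \<union> (\<Union>m. \<Inter>n. D m n) \<in> null_sets M"
      using N(1) Dnull by (intro null_sets.Un null_sets_UN) auto
    show "{\<omega> \<in> space M. Y \<omega> \<notin> S \<omega>} \<subseteq> (\<Union>n. N n) \<union> (\<Union>m. \<Inter>n. D m n)"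
    proof
      fix \<omega> assume w: "\<omega> \<in> {\<omega> \<in> space M. Y \<omega> \<notin> S \<omega>}"
      then have "open (- S \<omega>)" "Y \<omega> \<in> - S \<omega>" using cl by auto
      then obtain e where e: "e > 0" "ball (Y \<omega>) e \<subseteq> - S \<omega>" by (meson open_contains_ball)
      obtain m :: nat where m: "1/(real m+1) < e"
        using e(1) by (metis Suc_eq_plus1_left add.commute nat_approx_posE of_nat_Suc)
      show "\<omega> \<in> (\<Union>n. N n) \<union> (\<Union>m. \<Inter>n. D m n)"
      proof (cases "\<omega> \<in> (\<Union>n. N n)")
        case False
        then have "X n \<omega> \<in> S \<omega>" for n using N(2)[of n] w by auto
        then have "X n \<omega> \<notin> ball (Y \<omega>) e" for n using e by auto
        then have "e \<le> dist (X n \<omega>) (Y \<omega>)" for n by (auto simp: dist_commute not_less)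
        then have "\<omega> \<in> D m n" for n using w m unfolding D_def by (auto intro: less_le_trans)
        then show ?thesis by auto
      qed auto
    qed
  qed
qed



lemma NA2D:
  assumes "NA2 M F K T" "t \<le> T" "\<eta> \<in> L0 M (F t) (\<lambda>_. UNIV)" "a \<in> Aset M F K t T"
    "(\<lambda>\<omega>. \<eta> \<omega> + a \<omega>) \<in> L0 M (F T) (K T)"
  shows "\<eta> \<in> L0 M (F t) (K t)"
proof -
  have "\<forall>t\<le>T. \<forall>\<eta>\<in>L0 M (F t) (\<lambda>_. UNIV). (\<exists>a\<in>Aset M F K t T. (\<lambda>\<omega>. \<eta> \<omega> + a \<omega>) \<in> L0 M (F T) (K T)) \<longrightarrow> \<eta> \<in> L0 M (F t) (K t)"
    using assms(1) unfolding NA2_def .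
  then have "(\<exists>a\<in>Aset M F K t T. (\<lambda>\<omega>. \<eta> \<omega> + a \<omega>) \<in> L0 M (F T) (K T)) \<longrightarrow> \<eta> \<in> L0 M (F t) (K t)"
    using assms(2,3) by blast
  then show ?thesis using assms(4,5) by blast
qed

lemma neg_diff_mem: "\<forall>x\<in>S. \<forall>y\<in>S. x + y \<in> S \<Longrightarrow> - a \<in> S \<Longrightarrow> (b::'b::ab_group_add) \<in> S \<Longrightarrow> - (a - b) \<in> S"
proof -
  assume "\<forall>x\<in>S. \<forall>y\<in>S. x + y \<in> S" "- a \<in> S" "b \<in> S"
  moreover have "- (a - b) = - a + b" by simp
  ultimately show ?thesis by metis
qed


context
  fixes M :: "'a measure" and F :: "nat \<Rightarrow> 'a measure"
    and K :: "nat \<Rightarrow> 'a \<Rightarrow> (real^'d) set" and T :: nat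
  assumes setting: "market_setting M F K T"
    and cones: "\<forall>t\<le>T. AE \<omega> in M. cone (K t \<omega>)"
begin

lemma ps: "prob_space M" using setting unfolding market_setting_def by auto

lemma spF: "t \<le> T \<Longrightarrow> space (F t) = space M" using setting unfolding market_setting_def by auto
lemma setsF: "t \<le> T \<Longrightarrow> sets (F t) \<subseteq> sets M" using setting unfolding market_setting_def by auto

lemma filt: "s \<le> u \<Longrightarrow> u \<le> T \<Longrightarrow> sets (F s) \<subseteq> sets (F u)"
proof (induction u rule: dec_induct)
  case base then show ?case by simp
next
  case (step n)
  then have "n < T" by simp
  then have "sets (F n) \<subseteq> sets (F (Suc n))" using setting unfolding market_setting_def by blast
  with step show ?case by auto
qed

lemma measF: "s \<le> u \<Longrightarrow> u \<le> T \<Longrightarrow> f \<in> borel_measurable (F s) \<Longrightarrow> f \<in> borel_measurable (F u)"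
proof -
  assume su: "s \<le> u" "u \<le> T" and f: "f \<in> borel_measurable (F s)"
  have "space (F s) = space (F u)" using spF[of s] spF[of u] su by simp
  moreover have "sets (F s) \<subseteq> sets (F u)" using filt[OF su] .
  ultimately show ?thesis using measurable_sub[OF f] by blast
qed

lemma measM: "t \<le> T \<Longrightarrow> f \<in> borel_measurable (F t) \<Longrightarrow> f \<in> borel_measurable M"
proof -
  assume t: "t \<le> T" and f: "f \<in> borel_measurable (F t)"
  show ?thesis using measurable_sub[OF f spF[OF t] setsF[OF t]] .
qed

lemma zeroK: "t \<le> T \<Longrightarrow> AE \<omega> in M. 0 \<in> K t \<omega>"
proof -
  assume "t \<le> T"
  then have "AE \<omega> in M. K t \<omega> \<inter> nonpos_orthant = {0}" using setting unfolding market_setting_def by auto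
  then show ?thesis by eventually_elim auto
qed

lemma closedK: "t \<le> T \<Longrightarrow> \<omega> \<in> space M \<Longrightarrow> closed (K t \<omega>)"
  using setting spF unfolding market_setting_def random_closed_set_def by auto

lemma rcsK: "t \<le> T \<Longrightarrow> random_closed_set (F t) (K t)"
  using setting unfolding market_setting_def by auto

lemma orthK: "t \<le> T \<Longrightarrow> AE \<omega> in M. \<forall>x\<in>K t \<omega>. \<forall>y\<in>nonneg_orthant. x + y \<in> K t \<omega>"
  using setting unfolding market_setting_def by auto

lemma addK: "t \<le> T \<Longrightarrow> AE \<omega> in M. \<forall>x\<in>K t \<omega>. \<forall>y\<in>K t \<omega>. x + y \<in> K t \<omega>"
proof -
  assume t: "t \<le> T"
  have cv: "AE \<omega> in M. convex (K t \<omega>)" using setting t unfolding market_setting_def by auto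
  have "AE \<omega> in M. cone (K t \<omega>)" using cones t by auto
  with cv show ?thesis by eventually_elim (auto intro: cone_add)
qed

lemma coneK: "t \<le> T \<Longrightarrow> AE \<omega> in M. cone (K t \<omega>)" using cones by auto

lemma zero_L0: "t \<le> T \<Longrightarrow> (\<lambda>_. 0) \<in> L0 M (F u) (K t)"
proof -
  assume t: "t \<le> T"
  have "(\<lambda>_. 0) \<in> borel_measurable (F u)" by (rule borel_measurable_const)
  moreover have "AE \<omega> in M. 0 \<in> K t \<omega>" using zeroK[OF t] .
  ultimately show ?thesis unfolding L0_def by blast
qed

lemma zero_L0neg: "t \<le> T \<Longrightarrow> (\<lambda>_. 0) \<in> L0 M (F u) (negset (K t))"
proof -
  assume t: "t \<le> T"
  have "(\<lambda>_. 0) \<in> borel_measurable (F u)" by (rule borel_measurable_const)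
  moreover have "AE \<omega> in M. 0 \<in> negset (K t) \<omega>" using zeroK[OF t] unfolding negset_iff by simp
  ultimately show ?thesis unfolding L0_def by blast
qed

lemma NA2_shift:
  assumes na: "NA2 M F K T" and su: "s \<le> u" "u \<le> T"
    and xi: "\<xi> \<in> L0 M (F s) (K u)"
  shows "\<xi> \<in> L0 M (F s) (K s)"
proof -
  define \<zeta> where "\<zeta> v = (if v = u then (\<lambda>\<omega>. - \<xi> \<omega>) else (\<lambda>_. 0))" for v
  have z: "\<forall>v\<in>{s..T}. \<zeta> v \<in> L0 M (F v) (negset (K v))"
  proof
    fix v assume v: "v \<in> {s..T}"
    show "\<zeta> v \<in> L0 M (F v) (negset (K v))"
    proof (cases "v = u")
      case True
      have "\<xi> \<in> borel_measurable (F u)" using xi su measF unfolding L0_def by auto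
      then show ?thesis using True xi unfolding \<zeta>_def L0_def negset_iff by auto
    next
      case False then show ?thesis using zero_L0neg v unfolding \<zeta>_def by auto
    qed
  qed
  have sum: "(\<Sum>v\<in>{s..T}. \<zeta> v \<omega>) = - \<xi> \<omega>" for \<omega>
  proof -
    have "(\<Sum>v\<in>{s..T}. \<zeta> v \<omega>) = (\<Sum>v\<in>{s..T}. if v = u then - \<xi> \<omega> else 0)"
      unfolding \<zeta>_def by (intro sum.cong) auto
    also have "\<dots> = - \<xi> \<omega>" using su by simp
    finally show ?thesis .
  qed
  have a: "(\<lambda>\<omega>. - \<xi> \<omega>) \<in> Aset M F K s T"
    unfolding Aset_def using z sum by (auto intro!: exI[of _ \<zeta>])
  have "(\<lambda>\<omega>. \<xi> \<omega> + - \<xi> \<omega>) \<in> L0 M (F T) (K T)" using zero_L0[of T] by simp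
  moreover have "\<xi> \<in> L0 M (F s) (\<lambda>_. UNIV)" using xi unfolding L0_def by auto
  ultimately show ?thesis using NA2D[OF na _ _ a] su by simp
qed

lemma Xi0_sub:
  assumes na: "NA2 M F K T" and t: "t \<le> T"
  shows "Xi0 M F K T t \<subseteq> L0 M (F t) (K t)"
proof
  fix f assume f: "f \<in> Xi0 M F K T t"
  then obtain a where a: "a \<in> Aset M F K t T" "f = (\<lambda>\<omega>. - a \<omega>)" and fm: "f \<in> L0 M (F t) (\<lambda>_. UNIV)"
    unfolding Xi0_def by auto
  have "(\<lambda>\<omega>. f \<omega> + a \<omega>) \<in> L0 M (F T) (K T)" using zero_L0[of T] a(2) by simp
  then show "f \<in> L0 M (F t) (K t)" using NA2D[OF na t fm a(1)] by simp
qed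

lemma L0_sub_Xi0:
  assumes t: "t \<le> T"
  shows "L0 M (F t) (K t) \<subseteq> Xi0 M F K T t"
proof
  fix \<xi> assume xi: "\<xi> \<in> L0 M (F t) (K t)"
  define \<zeta> where "\<zeta> v = (if v = t then (\<lambda>\<omega>. - \<xi> \<omega>) else (\<lambda>_. 0))" for v
  have z: "\<forall>v\<in>{t..T}. \<zeta> v \<in> L0 M (F v) (negset (K v))"
  proof
    fix v assume v: "v \<in> {t..T}"
    show "\<zeta> v \<in> L0 M (F v) (negset (K v))"
    proof (cases "v = t")
      case True
      then show ?thesis using xi unfolding \<zeta>_def L0_def negset_iff by auto
    next
      case False then show ?thesis using zero_L0neg v unfolding \<zeta>_def by auto
    qed
  qed
  have sum: "(\<Sum>v\<in>{t..T}. \<zeta> v \<omega>) = - \<xi> \<omega>" for \<omega>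
  proof -
    have "(\<Sum>v\<in>{t..T}. \<zeta> v \<omega>) = (\<Sum>v\<in>{t..T}. if v = t then - \<xi> \<omega> else 0)"
      unfolding \<zeta>_def by (intro sum.cong) auto
    also have "\<dots> = - \<xi> \<omega>" using t by simp
    finally show ?thesis .
  qed
  have a: "(\<lambda>\<omega>. - \<xi> \<omega>) \<in> Aset M F K t T"
    unfolding Aset_def using z sum by (auto intro!: exI[of _ \<zeta>])
  have "\<xi> \<in> (\<lambda>f \<omega>. - f \<omega>) ` Aset M F K t T"
    by (rule image_eqI[where f="\<lambda>f \<omega>. - f \<omega>", OF _ a]) simp
  moreover have "\<xi> \<in> L0 M (F t) (\<lambda>_. UNIV)" using xi unfolding L0_def by auto
  ultimately show "\<xi> \<in> Xi0 M F K T t" unfolding Xi0_def by auto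
qed

lemma part1_rev:
  assumes X: "\<forall>t\<le>T. Xi0 M F K T t = L0 M (F t) (K t)"
  shows "NA2 M F K T"
  unfolding NA2_def
proof (intro allI impI ballI)
  fix t \<eta> assume t: "t \<le> T" and eta: "\<eta> \<in> L0 M (F t) (\<lambda>_. UNIV)"
    and ex: "\<exists>a\<in>Aset M F K t T. (\<lambda>\<omega>. \<eta> \<omega> + a \<omega>) \<in> L0 M (F T) (K T)"
  then obtain \<xi> where xi: "\<forall>u\<in>{t..T}. \<xi> u \<in> L0 M (F u) (negset (K u))"
    and ea: "(\<lambda>\<omega>. \<eta> \<omega> + (\<Sum>u\<in>{t..T}. \<xi> u \<omega>)) \<in> L0 M (F T) (K T)"
    unfolding Aset_def by auto
  define b where "b \<omega> = \<eta> \<omega> + (\<Sum>u\<in>{t..T}. \<xi> u \<omega>)" for \<omega>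
  define \<zeta> where "\<zeta> v = (if v = T then (\<lambda>\<omega>. \<xi> T \<omega> - b \<omega>) else \<xi> v)" for v
  have z: "\<forall>v\<in>{t..T}. \<zeta> v \<in> L0 M (F v) (negset (K v))"
  proof
    fix v assume v: "v \<in> {t..T}"
    show "\<zeta> v \<in> L0 M (F v) (negset (K v))"
    proof (cases "v = T")
      case True
      have m1: "\<xi> T \<in> borel_measurable (F T)" using xi t unfolding L0_def by auto
      have m2: "b \<in> borel_measurable (F T)" using ea unfolding L0_def b_def by auto
      have ae1: "AE \<omega> in M. - \<xi> T \<omega> \<in> K T \<omega>" using xi t unfolding L0_def negset_iff by auto
      have ae2: "AE \<omega> in M. b \<omega> \<in> K T \<omega>" using ea unfolding L0_def b_def by auto
      have "AE \<omega> in M. - (\<xi> T \<omega> - b \<omega>) \<in> K T \<omega>"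
        using ae1 ae2 addK[OF order_refl] by eventually_elim (rule neg_diff_mem)
      then show ?thesis using True m1 m2 unfolding \<zeta>_def L0_def negset_iff by auto
    next
      case False then show ?thesis using xi v unfolding \<zeta>_def by auto
    qed
  qed
  have sum: "(\<Sum>v\<in>{t..T}. \<zeta> v \<omega>) = - \<eta> \<omega>" for \<omega>
  proof -
    have "(\<Sum>v\<in>{t..T}. \<zeta> v \<omega>) = (\<Sum>v\<in>{t..T}. \<xi> v \<omega> + (if v = T then - b \<omega> else 0))"
      unfolding \<zeta>_def by (intro sum.cong) auto
    also have "\<dots> = (\<Sum>v\<in>{t..T}. \<xi> v \<omega>) - b \<omega>" using t by (simp add: sum.distrib)
    also have "\<dots> = - \<eta> \<omega>" unfolding b_def by simp
    finally show ?thesis .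
  qed
  have a: "(\<lambda>\<omega>. - \<eta> \<omega>) \<in> Aset M F K t T"
    unfolding Aset_def using z sum by (auto intro!: exI[of _ \<zeta>])
  have "\<eta> \<in> (\<lambda>f \<omega>. - f \<omega>) ` Aset M F K t T"
    by (rule image_eqI[where f="\<lambda>f \<omega>. - f \<omega>", OF _ a]) simp
  then have "\<eta> \<in> Xi0 M F K T t" using eta unfolding Xi0_def by auto
  moreover have "Xi0 M F K T t = L0 M (F t) (K t)" using X t by blast
  ultimately show "\<eta> \<in> L0 M (F t) (K t)" by metis
qed

lemma part1: "NA2 M F K T \<longleftrightarrow> (\<forall>t\<le>T. Xi0 M F K T t = L0 M (F t) (K t))"
proof
  assume na: "NA2 M F K T"
  show "\<forall>t\<le>T. Xi0 M F K T t = L0 M (F t) (K t)"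
  proof (intro allI impI)
    fix t assume "t \<le> T"
    then show "Xi0 M F K T t = L0 M (F t) (K t)" using Xi0_sub[OF na] L0_sub_Xi0 by (intro equalityI)
  qed
next
  assume "\<forall>t\<le>T. Xi0 M F K T t = L0 M (F t) (K t)"
  then show "NA2 M F K T" by (rule part1_rev)
qed

end


context
  fixes M :: "'a measure" and F :: "nat \<Rightarrow> 'a measure"
    and K :: "nat \<Rightarrow> 'a \<Rightarrow> (real^'d) set" and T :: nat
  assumes setting: "market_setting M F K T"
    and cones: "\<forall>t\<le>T. AE \<omega> in M. cone (K t \<omega>)"
begin

lemma part3:
  assumes na: "NA2 M F K T" and t: "t \<le> T"
  shows "Xihat0 M F K T t \<inter> L0 M (F t) (negset (K t)) \<subseteq> L0 M (F t) (Kzero (K t))"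
proof
  fix x assume x: "x \<in> Xihat0 M F K T t \<inter> L0 M (F t) (negset (K t))"
  then have xm: "x \<in> borel_measurable (F t)" and xn: "AE \<omega> in M. - x \<omega> \<in> K t \<omega>"
    unfolding L0_def negset_iff by auto
  have xK: "AE \<omega> in M. x \<omega> \<in> K t \<omega>"
  proof (cases "T \<le> t")
    case True
    then have tT: "t = T" using t by simp
    have "x \<in> Xi0 M F K T T" using x True unfolding Xihat0_def by auto
    then have "x \<in> L0 M (F T) (K T)" using Xi0_sub[OF setting cones na order_refl] by blast
    then show ?thesis unfolding L0_def tT by blast
  next
    case False
    then have tT: "Suc t \<le> T" by simp
    from x False obtain k Y where k: "k \<in> L0 M (F t) (K t)"
      and Y: "Y \<in> cl0 M (Xi0 M F K T (Suc t) \<inter> L0 M (F t) (\<lambda>_. UNIV))"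
      and xe: "x = (\<lambda>\<omega>. k \<omega> + Y \<omega>)"
      unfolding Xihat0_def rv_plus_def by auto
    have km: "k \<in> borel_measurable (F t)" using k unfolding L0_def by auto
    have Ye: "Y = (\<lambda>\<omega>. x \<omega> - k \<omega>)" using xe by auto
    have YmF: "Y \<in> borel_measurable (F t)" unfolding Ye using xm km by measurable
    from Y obtain X where X: "\<And>n. X n \<in> Xi0 M F K T (Suc t) \<inter> L0 M (F t) (\<lambda>_. UNIV)"
      and cv: "conv_in_prob M X Y" and Ym: "Y \<in> borel_measurable M"
      unfolding cl0_def by auto
    have XK: "AE \<omega> in M. X n \<omega> \<in> K (Suc t) \<omega>" for n
    proof -
      have "X n \<in> L0 M (F (Suc t)) (K (Suc t))" using X[of n] Xi0_sub[OF setting cones na tT] by blast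
      then show ?thesis unfolding L0_def by blast
    qed
    have Xm: "X n \<in> borel_measurable M" for n
      using X[of n] measM[OF setting cones t] unfolding L0_def by blast
    have "AE \<omega> in M. Y \<omega> \<in> K (Suc t) \<omega>"
      by (rule AE_closed_limit[OF ps[OF setting cones] Ym Xm cv XK closedK[OF setting cones tT]])
    then have "Y \<in> L0 M (F t) (K (Suc t))" using YmF unfolding L0_def by blast
    then have "Y \<in> L0 M (F t) (K t)" using NA2_shift[OF setting cones na _ tT] by simp
    then have YK: "AE \<omega> in M. Y \<omega> \<in> K t \<omega>" unfolding L0_def by blast
    have kK: "AE \<omega> in M. k \<omega> \<in> K t \<omega>" using k unfolding L0_def by blast
    show ?thesis using YK kK addK[OF setting cones t] unfolding xe by eventually_elim blast
  qed
  have "AE \<omega> in M. x \<omega> \<in> Kzero (K t) \<omega>"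
    using xK xn coneK[OF setting cones t] unfolding Kzero_def
    by eventually_elim (rule cone_Kzero)
  then show "x \<in> L0 M (F t) (Kzero (K t))" using xm unfolding L0_def by blast
qed

lemma NA2_from_C:
  assumes C: "\<And>t \<xi>. Suc t \<le> T \<Longrightarrow> \<xi> \<in> L0 M (F t) (K (Suc t)) \<Longrightarrow> AE \<omega> in M. \<xi> \<omega> \<in> K t \<omega>"
  shows "NA2 M F K T"
proof -
  define P where "P t = (\<forall>\<eta> \<xi>. \<eta> \<in> borel_measurable (F t) \<longrightarrow>
      (\<forall>u\<in>{t..T}. \<xi> u \<in> L0 M (F u) (negset (K u))) \<longrightarrow>
      (AE \<omega> in M. \<eta> \<omega> + (\<Sum>u\<in>{t..T}. \<xi> u \<omega>) \<in> K T \<omega>) \<longrightarrow>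
      (AE \<omega> in M. \<eta> \<omega> \<in> K t \<omega>))" for t
  have PT: "P t" if t: "t \<le> T" for t
    using t
  proof (induction t rule: inc_induct)
    case base
    show ?case unfolding P_def
    proof (intro allI impI)
      fix \<eta> :: "'a \<Rightarrow> real^'d" and \<xi>
      assume xi: "\<forall>u\<in>{T..T}. \<xi> u \<in> L0 M (F u) (negset (K u))"
        and ae: "AE \<omega> in M. \<eta> \<omega> + (\<Sum>u\<in>{T..T}. \<xi> u \<omega>) \<in> K T \<omega>"
      have a1: "AE \<omega> in M. \<eta> \<omega> + \<xi> T \<omega> \<in> K T \<omega>" using ae by simp
      have a2: "AE \<omega> in M. - \<xi> T \<omega> \<in> K T \<omega>" using xi unfolding L0_def negset_iff by auto
      show "AE \<omega> in M. \<eta> \<omega> \<in> K T \<omega>"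
        using a1 a2 addK[OF setting cones order_refl]
      proof eventually_elim
        case (elim \<omega>)
        then have "(\<eta> \<omega> + \<xi> T \<omega>) + (- \<xi> T \<omega>) \<in> K T \<omega>" by blast
        then show ?case by simp
      qed
    qed
  next
    case (step n)
    show ?case unfolding P_def
    proof (intro allI impI)
      fix \<eta> :: "'a \<Rightarrow> real^'d" and \<xi>
      assume em: "\<eta> \<in> borel_measurable (F n)"
        and xi: "\<forall>u\<in>{n..T}. \<xi> u \<in> L0 M (F u) (negset (K u))"
        and ae: "AE \<omega> in M. \<eta> \<omega> + (\<Sum>u\<in>{n..T}. \<xi> u \<omega>) \<in> K T \<omega>"
      have nT: "n \<le> T" "Suc n \<le> T" using step.hyps by auto
      have xn: "\<xi> n \<in> L0 M (F n) (negset (K n))" using xi nT by auto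
      define \<eta>' where "\<eta>' \<omega> = \<eta> \<omega> + \<xi> n \<omega>" for \<omega>
      have e'm: "\<eta>' \<in> borel_measurable (F n)" unfolding \<eta>'_def using em xn unfolding L0_def by auto
      have e'm2: "\<eta>' \<in> borel_measurable (F (Suc n))"
        using measF[OF setting cones le_SucI[OF order_refl] nT(2) e'm] .
      have xi2: "\<forall>u\<in>{Suc n..T}. \<xi> u \<in> L0 M (F u) (negset (K u))" using xi by auto
      have ae2: "AE \<omega> in M. \<eta>' \<omega> + (\<Sum>u\<in>{Suc n..T}. \<xi> u \<omega>) \<in> K T \<omega>"
        using ae unfolding \<eta>'_def by (simp add: sum.atLeast_Suc_atMost[OF nT(1)] add.assoc)
      have "AE \<omega> in M. \<eta>' \<omega> \<in> K (Suc n) \<omega>"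
        using step.IH e'm2 xi2 ae2 unfolding P_def by blast
      then have "\<eta>' \<in> L0 M (F n) (K (Suc n))" using e'm unfolding L0_def by blast
      then have a1: "AE \<omega> in M. \<eta>' \<omega> \<in> K n \<omega>" using C[OF nT(2)] by blast
      have a2: "AE \<omega> in M. - \<xi> n \<omega> \<in> K n \<omega>" using xn unfolding L0_def negset_iff by auto
      show "AE \<omega> in M. \<eta> \<omega> \<in> K n \<omega>"
        using a1 a2 addK[OF setting cones nT(1)]
      proof eventually_elim
        case (elim \<omega>)
        then have "\<eta>' \<omega> + (- \<xi> n \<omega>) \<in> K n \<omega>" by blast
        then show ?case unfolding \<eta>'_def by simp
      qed
    qed
  qed
  show ?thesis unfolding NA2_def
  proof (intro allI impI ballI)
    fix t \<eta> assume t: "t \<le> T" and eta: "\<eta> \<in> L0 M (F t) (\<lambda>_. UNIV)"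
      and ex: "\<exists>a\<in>Aset M F K t T. (\<lambda>\<omega>. \<eta> \<omega> + a \<omega>) \<in> L0 M (F T) (K T)"
    then obtain \<xi> where xi: "\<forall>u\<in>{t..T}. \<xi> u \<in> L0 M (F u) (negset (K u))"
      and ea: "(\<lambda>\<omega>. \<eta> \<omega> + (\<Sum>u\<in>{t..T}. \<xi> u \<omega>)) \<in> L0 M (F T) (K T)"
      unfolding Aset_def by auto
    have em: "\<eta> \<in> borel_measurable (F t)" using eta unfolding L0_def by auto
    have "AE \<omega> in M. \<eta> \<omega> + (\<Sum>u\<in>{t..T}. \<xi> u \<omega>) \<in> K T \<omega>" using ea unfolding L0_def by auto
    then have "AE \<omega> in M. \<eta> \<omega> \<in> K t \<omega>" using PT[OF t] em xi unfolding P_def by blast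
    then show "\<eta> \<in> L0 M (F t) (K t)" using em unfolding L0_def by blast
  qed
qed

end


lemma orth_step:
  fixes d y :: "real^'d" and r :: real
  assumes "dist y d < r"
  shows "(d + r *\<^sub>R (\<chi> i. 1)) - y \<in> nonneg_orthant"
  unfolding nonneg_orthant_def
proof (intro CollectI allI)
  fix i
  have "\<bar>(y - d) $ i\<bar> \<le> norm (y - d)" by (rule component_le_norm_cart)
  also have "\<dots> < r" using assms by (simp add: dist_norm)
  finally have "y $ i - d $ i < r" by simp
  then show "0 \<le> (d + r *\<^sub>R (\<chi> i. 1) - y) $ i" by simp
qed

context
  fixes M :: "'a measure" and F :: "nat \<Rightarrow> 'a measure"
    and K :: "nat \<Rightarrow> 'a \<Rightarrow> (real^'d) set" and T :: nat
  assumes setting: "market_setting M F K T"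
    and cones: "\<forall>t\<le>T. AE \<omega> in M. cone (K t \<omega>)"
begin

lemma core_sub:
  assumes na: "NA2 M F K T" and s: "Suc s \<le> T"
    and Y: "random_closed_set (F s) Y" and YK: "AE \<omega> in M. Y \<omega> \<subseteq> K (Suc s) \<omega>"
  shows "AE \<omega> in M. Y \<omega> \<subseteq> K s \<omega>"
proof -
  have s0: "s \<le> T" using s by simp
  obtain D :: "(real^'d) set" where D: "countable D" "\<And>X. open X \<Longrightarrow> X \<noteq> {} \<Longrightarrow> \<exists>d\<in>D. d \<in> X"
    by (rule countable_dense_setE) blast
  define one :: "real^'d" where "one = (\<chi> i. 1)"
  define r where "r n = 1 / (real n + 1)" for n :: nat
  have rpos: "r n > 0" for n unfolding r_def by simp
  define A where "A d n = {\<omega> \<in> space M. Y \<omega> \<inter> ball d (r n) \<noteq> {}}" for d n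
  define p where "p d n = d + r n *\<^sub>R one" for d n
  define \<eta> where "\<eta> d n = (\<lambda>\<omega>. if \<omega> \<in> A d n then p d n else 0)" for d n
  have Asets: "A d n \<in> sets (F s)" for d n
  proof -
    have "effros_measurable (F s) Y" using Y unfolding random_closed_set_def by blast
    then have "{\<omega> \<in> space (F s). Y \<omega> \<inter> ball d (r n) \<noteq> {}} \<in> sets (F s)"
      unfolding effros_measurable_def by blast
    then show ?thesis unfolding A_def spF[OF setting cones s0] .
  qed
  have etam: "\<eta> d n \<in> borel_measurable (F s)" for d n
    unfolding \<eta>_def
    by (rule measurable_If_set) (auto intro: Asets)
  have etaK1: "AE \<omega> in M. \<eta> d n \<omega> \<in> K (Suc s) \<omega>" for d n
    using YK orthK[OF setting cones s] zeroK[OF setting cones s]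
  proof eventually_elim
    case (elim \<omega>)
    show ?case
    proof (cases "\<omega> \<in> A d n")
      case True
      then obtain y where y: "y \<in> Y \<omega>" "dist d y < r n" unfolding A_def by auto
      then have yK: "y \<in> K (Suc s) \<omega>" using elim by auto
      have "p d n - y \<in> nonneg_orthant" unfolding p_def one_def
        by (rule orth_step) (use y in \<open>simp add: dist_commute\<close>)
      then have "y + (p d n - y) \<in> K (Suc s) \<omega>" using elim yK by blast
      then show ?thesis using True unfolding \<eta>_def by simp
    next
      case False then show ?thesis using elim unfolding \<eta>_def by simp
    qed
  qed
  have etaK: "AE \<omega> in M. \<eta> d n \<omega> \<in> K s \<omega>" for d n
  proof -
    have "\<eta> d n \<in> L0 M (F s) (K (Suc s))" using etam etaK1 unfolding L0_def by blast
    then have "\<eta> d n \<in> L0 M (F s) (K s)" using NA2_shift[OF setting cones na _ s] by simp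
    then show ?thesis unfolding L0_def by blast
  qed
  have all: "AE \<omega> in M. \<forall>d\<in>D. \<forall>n. \<eta> d n \<omega> \<in> K s \<omega>"
    using etaK D(1) by (simp add: AE_ball_countable AE_all_countable)
  show ?thesis using all AE_space
  proof eventually_elim
    case (elim \<omega>)
    show ?case
    proof
      fix y assume y: "y \<in> Y \<omega>"
      have cl: "closed (K s \<omega>)" using closedK[OF setting cones s0] elim by blast
      have "\<exists>z\<in>K s \<omega>. dist z y < e" if e: "e > 0" for e
      proof -
        define c where "c = 1 + norm one"
        have c: "c > 0" unfolding c_def by (simp add: add_pos_nonneg)
        obtain n :: nat where n: "1 / (real n + 1) < e / c"
          using e c by (metis divide_pos_pos nat_approx_posE of_nat_Suc Suc_eq_plus1 add.commute)
        have "ball y (r n) \<noteq> {}" using rpos[of n] by simp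
        then obtain d where d: "d \<in> D" "d \<in> ball y (r n)" using D(2)[of "ball y (r n)"] by auto
        then have "y \<in> Y \<omega> \<inter> ball d (r n)" using y by (simp add: dist_commute)
        then have "\<omega> \<in> A d n" unfolding A_def using elim by blast
        moreover have "\<eta> d n \<omega> \<in> K s \<omega>" using elim d(1) by blast
        ultimately have pK: "p d n \<in> K s \<omega>" unfolding \<eta>_def by simp
        have "dist (p d n) y \<le> dist (p d n) d + dist d y" by (rule dist_triangle)
        also have "dist (p d n) d = r n * norm one" unfolding p_def using rpos[of n] by (simp add: dist_norm)
        also have "dist d y < r n" using d by (simp add: dist_commute)
        finally have "dist (p d n) y < r n * c" unfolding c_def by (simp add: algebra_simps)
        also have "r n * c < e" using n c unfolding r_def by (simp add: field_simps)
        finally show ?thesis using pK by blast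
      qed
      then show "y \<in> K s \<omega>" using closed_approachable[OF cl] by blast
    qed
  qed
qed

end


lemma rcs_UN:
  fixes Z :: "'i \<Rightarrow> 'a \<Rightarrow> 'b::topological_space set"
  assumes I: "countable I" and Z: "\<And>i. i \<in> I \<Longrightarrow> random_closed_set H (Z i)"
  shows "random_closed_set H (\<lambda>\<omega>. closure (\<Union>i\<in>I. Z i \<omega>))"
  unfolding random_closed_set_def effros_measurable_def
proof (intro conjI ballI allI impI)
  fix \<omega> show "closed (closure (\<Union>i\<in>I. Z i \<omega>))" by simp
next
  fix U :: "'b set" assume U: "open U"
  have "{\<omega> \<in> space H. closure (\<Union>i\<in>I. Z i \<omega>) \<inter> U \<noteq> {}} = (\<Union>i\<in>I. {\<omega> \<in> space H. Z i \<omega> \<inter> U \<noteq> {}})"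
  proof -
    have "closure S \<inter> U \<noteq> {} \<longleftrightarrow> S \<inter> U \<noteq> {}" for S :: "'b set"
      using open_Int_closure_eq_empty[OF U, of S] by (simp add: Int_commute)
    then show ?thesis by auto
  qed
  also have "\<dots> \<in> sets H"
  proof (rule sets.countable_UN'[OF I])
    show "(\<lambda>i. {\<omega> \<in> space H. Z i \<omega> \<inter> U \<noteq> {}}) ` I \<subseteq> sets H"
      using Z U unfolding random_closed_set_def effros_measurable_def by blast
  qed
  finally show "{\<omega> \<in> space H. closure (\<Union>i\<in>I. Z i \<omega>) \<inter> U \<noteq> {}} \<in> sets H" .
qed

lemma core_exists:
  fixes X :: "'a \<Rightarrow> 'b::euclidean_space set"
  assumes ps: "prob_space M" and sp: "space H = space M" and sH: "sets H \<subseteq> sets M"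
    and Xcl: "\<And>\<omega>. \<omega> \<in> space M \<Longrightarrow> closed (X \<omega>)"
  shows "\<exists>Y. is_cond_core M H X Y"
proof -
  interpret prob_space M by fact
  define C where "C = {Z. random_closed_set H Z \<and> (AE \<omega> in M. Z \<omega> \<subseteq> X \<omega>)}"
  obtain B :: "'b set set" where B: "countable B" "topological_basis B"
    using ex_countable_basis by blast
  have Bopen: "b \<in> B \<Longrightarrow> open b" for b using B(2) by (simp add: topological_basis_def)
  define E where "E Z b = {\<omega> \<in> space M. Z \<omega> \<inter> b \<noteq> {}}" for Z :: "'a \<Rightarrow> 'b set" and b
  have EH: "E Z b \<in> sets H" if "random_closed_set H Z" "b \<in> B" for Z b
    using that Bopen[of b] sp unfolding E_def random_closed_set_def effros_measurable_def by metis
  then have EM: "E Z b \<in> sets M" if "random_closed_set H Z" "b \<in> B" for Z b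
    using that sH by blast
  have CUN: "(\<lambda>\<omega>. closure (\<Union>i\<in>I. Z i \<omega>)) \<in> C" if I: "countable I" and Z: "\<And>i. i \<in> I \<Longrightarrow> Z i \<in> C" for I and Z :: "'i \<Rightarrow> 'a \<Rightarrow> 'b set"
  proof -
    have "random_closed_set H (\<lambda>\<omega>. closure (\<Union>i\<in>I. Z i \<omega>))"
      using rcs_UN[OF I, of H Z] Z unfolding C_def by blast
    moreover have "AE \<omega> in M. \<forall>i\<in>I. Z i \<omega> \<subseteq> X \<omega>"
      using Z I unfolding C_def by (simp add: AE_ball_countable)
    then have "AE \<omega> in M. closure (\<Union>i\<in>I. Z i \<omega>) \<subseteq> X \<omega>"
      using AE_space by eventually_elim (rule closure_minimal, auto intro: Xcl)
    ultimately show ?thesis unfolding C_def by blast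
  qed
  have C0: "(\<lambda>_. {}) \<in> C" unfolding C_def random_closed_set_def effros_measurable_def by simp
  define s where "s b = Sup ((\<lambda>Z. measure M (E Z b)) ` C)" for b
  have bdd: "bdd_above ((\<lambda>Z. measure M (E Z b)) ` C)" for b
    by (rule bdd_aboveI[where M=1]) (auto simp: prob_le_1)
  have ne: "(\<lambda>Z. measure M (E Z b)) ` C \<noteq> {}" for b using C0 by blast
  have "\<forall>b. \<forall>n::nat. \<exists>W. W \<in> C \<and> s b - 1/(real n+1) < measure M (E W b)"
  proof (intro allI)
    fix b and n :: nat
    have "s b - 1/(real n+1) < s b" by simp
    then show "\<exists>W. W \<in> C \<and> s b - 1/(real n+1) < measure M (E W b)"
      unfolding s_def using less_cSup_iff[OF ne bdd] by blast
  qed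
  then obtain W where W: "\<And>b n. W b n \<in> C" "\<And>b n. s b - 1/(real n+1) < measure M (E (W b n) b)"
    by metis
  define I where "I = B \<times> (UNIV :: nat set)"
  have I: "countable I" unfolding I_def using B(1) by (simp add: countable_SIGMA)
  define Y where "Y \<omega> = closure (\<Union>i\<in>I. W (fst i) (snd i) \<omega>)" for \<omega>
  have YC: "Y \<in> C" unfolding Y_def by (rule CUN[OF I]) (use W(1) in auto)
  have WY: "W b n \<omega> \<subseteq> Y \<omega>" if "b \<in> B" for b n \<omega>
  proof -
    have "(b, n) \<in> I" using that unfolding I_def by simp
    then have "W b n \<omega> \<subseteq> (\<Union>i\<in>I. W (fst i) (snd i) \<omega>)"
      using UN_upper[of "(b,n)" I "\<lambda>i. W (fst i) (snd i) \<omega>"] by simp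
    then show ?thesis unfolding Y_def using closure_subset by blast
  qed
  have Ycore: "AE \<omega> in M. Z \<omega> \<subseteq> Y \<omega>" if ZC: "Z \<in> C" for Z
  proof -
    define Z' where "Z' i = (if i then Y else Z)" for i :: bool
    have Y'C: "(\<lambda>\<omega>. closure (\<Union>i\<in>UNIV. Z' i \<omega>)) \<in> C"
      by (rule CUN) (use YC ZC in \<open>auto simp: Z'_def\<close>)
    have Y'eq: "(\<Union>i\<in>UNIV. Z' i \<omega>) = Y \<omega> \<union> Z \<omega>" for \<omega>
      unfolding Z'_def by (simp add: UNIV_bool Un_commute)
    have rY: "random_closed_set H Y" and rZ: "random_closed_set H Z" and rY': "random_closed_set H (\<lambda>\<omega>. closure (Y \<omega> \<union> Z \<omega>))"
      using YC ZC Y'C Y'eq unfolding C_def by auto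
    have null: "E Z b - E Y b \<in> null_sets M" if b: "b \<in> B" for b
    proof -
      have Eeq: "E (\<lambda>\<omega>. closure (Y \<omega> \<union> Z \<omega>)) b = E Y b \<union> E Z b"
      proof -
        have "closure S \<inter> b \<noteq> {} \<longleftrightarrow> S \<inter> b \<noteq> {}" for S :: "'b set"
          using open_Int_closure_eq_empty[OF Bopen[OF b], of S] by (simp add: Int_commute)
        then show ?thesis unfolding E_def by auto
      qed
      have "measure M (E (\<lambda>\<omega>. closure (Y \<omega> \<union> Z \<omega>)) b) \<le> s b"
        unfolding s_def using Y'C Y'eq by (intro cSup_upper[OF _ bdd]) auto
      then have m1: "measure M (E Y b \<union> E Z b) \<le> s b" using Eeq by simp
      have m2: "s b \<le> measure M (E Y b)"
      proof (rule field_le_epsilon)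
        fix e :: real assume e: "0 < e"
        obtain n :: nat where n: "1 / (real n + 1) < e"
          using e by (metis nat_approx_posE of_nat_Suc Suc_eq_plus1 add.commute)
        have "E (W b n) b \<subseteq> E Y b" using WY[OF b] unfolding E_def by blast
        then have "measure M (E (W b n) b) \<le> measure M (E Y b)"
          using EM[OF rY b] by (intro finite_measure_mono) auto
        then show "s b \<le> measure M (E Y b) + e" using W(2)[of b n] n by linarith
      qed
      have sets: "E Y b \<in> sets M" "E Z b \<in> sets M" using EM rY rZ b by auto
      have "measure M (E Z b - E Y b) = measure M ((E Y b \<union> E Z b) - E Y b)"
        by (rule arg_cong[where f="measure M"]) blast
      also have "\<dots> = measure M (E Y b \<union> E Z b) - measure M (E Y b)"
        using sets by (intro finite_measure_Diff) auto
      also have "\<dots> \<le> 0" using m1 m2 by linarith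
      finally have "measure M (E Z b - E Y b) \<le> 0" .
      then have "measure M (E Z b - E Y b) = 0" using measure_nonneg[of M] by (metis order_antisym)
      moreover have "E Z b - E Y b \<in> sets M" using sets by auto
      ultimately show ?thesis
        by (metis emeasure_eq_measure ennreal_0 null_setsI)
    qed
    have "AE \<omega> in M. \<forall>b\<in>B. \<omega> \<notin> E Z b - E Y b"
    proof -
      have "\<forall>b\<in>B. AE \<omega> in M. \<omega> \<notin> E Z b - E Y b"
        using null by (blast intro: AE_not_in)
      then show ?thesis using B(1) by (simp only: AE_ball_countable)
    qed
    then show ?thesis using AE_space
    proof eventually_elim
      case (elim \<omega>)
      show ?case
      proof
        fix z assume z: "z \<in> Z \<omega>"
        show "z \<in> Y \<omega>"
        proof (rule ccontr)
          assume nz: "z \<notin> Y \<omega>"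
          have "open (- Y \<omega>)" unfolding Y_def by auto
          then obtain b where b: "b \<in> B" "z \<in> b" "b \<subseteq> - Y \<omega>"
            using topological_basisE[OF B(2)] nz by (metis ComplI)
          then have "\<omega> \<in> E Z b" unfolding E_def using z elim by blast
          then have "\<omega> \<in> E Y b" using elim b(1) by blast
          then show False using b(3) unfolding E_def by blast
        qed
      qed
    qed
  qed
  have "is_cond_core M H X Y"
    unfolding is_cond_core_def
  proof (intro conjI allI impI)
    show "random_closed_set H Y" using YC unfolding C_def by blast
    show "AE \<omega> in M. Y \<omega> \<subseteq> X \<omega>" using YC unfolding C_def by blast
    fix Z assume "random_closed_set H Z \<and> (AE \<omega> in M. Z \<omega> \<subseteq> X \<omega>)"
    then show "AE \<omega> in M. Z \<omega> \<subseteq> Y \<omega>" using Ycore unfolding C_def by blast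
  qed
  then show ?thesis by blast
qed


lemma rcs_singleton:
  fixes \<xi> :: "'a \<Rightarrow> 'b::metric_space"
  assumes "\<xi> \<in> borel_measurable H"
  shows "random_closed_set H (\<lambda>\<omega>. {\<xi> \<omega>})"
  unfolding random_closed_set_def effros_measurable_def
proof (intro conjI ballI allI impI)
  fix \<omega> show "closed {\<xi> \<omega>}" by simp
next
  fix U :: "'b set" assume U: "open U"
  have "{\<omega> \<in> space H. {\<xi> \<omega>} \<inter> U \<noteq> {}} = \<xi> -` U \<inter> space H" by auto
  also have "\<dots> \<in> sets H" using measurable_sets[OF assms] U by auto
  finally show "{\<omega> \<in> space H. {\<xi> \<omega>} \<inter> U \<noteq> {}} \<in> sets H" .
qed

theorem lemma7p2:
  fixes M :: "'a measure" and F :: "nat \<Rightarrow> 'a measure"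
    and K :: "nat \<Rightarrow> 'a \<Rightarrow> (real^'d) set" and T :: nat
  assumes setting: "market_setting M F K T"
    and cones: "\<forall>t\<le>T. AE \<omega> in M. cone (K t \<omega>)"
  shows "(NA2 M F K T \<longleftrightarrow> (\<forall>t\<le>T. Xi0 M F K T t = L0 M (F t) (K t)))
       \<and> (NA2 M F K T \<longleftrightarrow>
            (\<forall>t\<in>{1..T}. \<forall>Y. is_cond_core M (F (t - 1)) (K t) Y
                 \<longrightarrow> (AE \<omega> in M. Y \<omega> \<subseteq> K (t - 1) \<omega>)))
       \<and> (strictly_proper M K T \<longrightarrow> NA2 M F K T \<longrightarrow>
            (\<forall>t\<le>T. Xihat0 M F K T t \<inter> L0 M (F t) (negset (K t)) \<subseteq> L0 M (F t) (Kzero (K t))))"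
proof (intro conjI impI allI)
  show "NA2 M F K T \<longleftrightarrow> (\<forall>t\<le>T. Xi0 M F K T t = L0 M (F t) (K t))"
    by (rule part1[OF setting cones])
next
  fix t assume na: "NA2 M F K T" and t: "t \<le> T"
  show "Xihat0 M F K T t \<inter> L0 M (F t) (negset (K t)) \<subseteq> L0 M (F t) (Kzero (K t))"
    by (rule part3[OF setting cones na t])
next
  show "NA2 M F K T \<longleftrightarrow>
            (\<forall>t\<in>{1..T}. \<forall>Y. is_cond_core M (F (t - 1)) (K t) Y
                 \<longrightarrow> (AE \<omega> in M. Y \<omega> \<subseteq> K (t - 1) \<omega>))"
  proof
    assume na: "NA2 M F K T"
    show "\<forall>t\<in>{1..T}. \<forall>Y. is_cond_core M (F (t - 1)) (K t) Y \<longrightarrow> (AE \<omega> in M. Y \<omega> \<subseteq> K (t - 1) \<omega>)"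
    proof (intro ballI allI impI)
      fix t Y assume t: "t \<in> {1..T}" and Y: "is_cond_core M (F (t - 1)) (K t) Y"
      obtain s where ts: "t = Suc s" using t by (cases t) auto
      have s: "Suc s \<le> T" using t ts by simp
      have "random_closed_set (F s) Y" "AE \<omega> in M. Y \<omega> \<subseteq> K (Suc s) \<omega>"
        using Y unfolding is_cond_core_def ts by auto
      then have "AE \<omega> in M. Y \<omega> \<subseteq> K s \<omega>" by (rule core_sub[OF setting cones na s])
      then show "AE \<omega> in M. Y \<omega> \<subseteq> K (t - 1) \<omega>" using ts by simp
    qed
  next
    assume H: "\<forall>t\<in>{1..T}. \<forall>Y. is_cond_core M (F (t - 1)) (K t) Y \<longrightarrow> (AE \<omega> in M. Y \<omega> \<subseteq> K (t - 1) \<omega>)"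
    show "NA2 M F K T"
    proof (rule NA2_from_C[OF setting cones])
      fix t \<xi> assume s: "Suc t \<le> T" and xi: "\<xi> \<in> L0 M (F t) (K (Suc t))"
      have t: "t \<le> T" using s by simp
      have cl: "\<And>\<omega>. \<omega> \<in> space M \<Longrightarrow> closed (K (Suc t) \<omega>)"
        using closedK[OF setting cones s] by blast
      obtain Y where Y: "is_cond_core M (F t) (K (Suc t)) Y"
        using core_exists[where X="K (Suc t)" and H="F t", OF ps[OF setting cones] spF[OF setting cones t] setsF[OF setting cones t] cl] by blast
      have mem: "Suc t \<in> {1..T}" using s by simp
      have "\<forall>Y. is_cond_core M (F (Suc t - 1)) (K (Suc t)) Y \<longrightarrow> (AE \<omega> in M. Y \<omega> \<subseteq> K (Suc t - 1) \<omega>)"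
        using bspec[OF H mem] .
      then have "is_cond_core M (F t) (K (Suc t)) Y \<longrightarrow> (AE \<omega> in M. Y \<omega> \<subseteq> K t \<omega>)"
        by simp
      then have YK: "AE \<omega> in M. Y \<omega> \<subseteq> K t \<omega>" using Y by (rule mp)
      have xm: "\<xi> \<in> borel_measurable (F t)" and xK: "AE \<omega> in M. \<xi> \<omega> \<in> K (Suc t) \<omega>"
        using xi unfolding L0_def by auto
      have rcs: "random_closed_set (F t) (\<lambda>\<omega>. {\<xi> \<omega>})" by (rule rcs_singleton[OF xm])
      have ae: "AE \<omega> in M. {\<xi> \<omega>} \<subseteq> K (Suc t) \<omega>" using xK by simp
      have core: "\<forall>Z. random_closed_set (F t) Z \<and> (AE \<omega> in M. Z \<omega> \<subseteq> K (Suc t) \<omega>) \<longrightarrow> (AE \<omega> in M. Z \<omega> \<subseteq> Y \<omega>)"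
        using Y unfolding is_cond_core_def by (rule conjunct2[THEN conjunct2])
      have "AE \<omega> in M. {\<xi> \<omega>} \<subseteq> Y \<omega>" using core[rule_format, OF conjI[OF rcs ae]] .
      then show "AE \<omega> in M. \<xi> \<omega> \<in> K t \<omega>" using YK by eventually_elim blast
    qed
  qed
qed

end
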